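(* Consider an instance of the MSSN-MC-HC problem with $m=|Q|$ sources and costs $c_s>0$, $c_r>0$, for which there exists a feasible solution using exactly one sink. Suppose there exists $\alpha\in(0,1]$ such that $\frac{c_s}{c_r}\ge\lceil\alpha m\rceil(\lceil\alpha m\rceil+1)(h_{\max}-1)$. Then the approximation ratio of SmartSelect on such instances (cost of its output divided by the optimum cost) is at most $1+\frac{1}{\alpha}$.
   Context: MSSN-MC-HC problem: given a finite undirected graph $G=(V,E)$ with $V=Q\cup R\cup B$ (pairwise disjoint; $Q$ = sources, $R$ = potential relay locations, $B$ = potential sink locations), costs $c_s$ per sink and $c_r$ per relay, and a positive integer $h_{\max}$, select $B'\subseteq B$, $R'\subseteq R$ such that in the subgraph induced by $Q\cup R'\cup B'$ every source has a path of at most $h_{\max}$ edges to some sink of $B'$ (a feasible solution), minimizing $c_s|B'|+c_r|R'|$. A feasible solution "using exactly one sink" has $|B'|=1$. SmartSelect algorithm: (1) If for some $b\in B$ every source has a path of at most $h_{\max}$ edges to $b$ in the subgraph induced by $Q\cup B$, output $(\{b\},\emptyset)$. (2) If some source has no path of at most $h_{\max}$ edges in $G$ to any sink, declare infeasible. (3) For each $b_i\in B$ let $Q_i$ be the set of sources whose shortest path to $b_i$ in $G$ has at most $h_{\max}$ edges, and $R_i$ the set of relays whose shortest path to $b_i$ has at most $h_{\max}-1$ edges. (4) Greedy phase, iterations $j=0,1,\dots$: $B^{(0)}=B$, $Q_i^{(0)}=Q_i$; $B^{(j)}$ is the set of sinks not yet picked and $Q_i^{(j)}$ the set of sources of $Q_i$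 not yet covered. In iteration $j$, for each $b_i\in B^{(j)}$, a relay-selection subroutine (e.g. the SPTiRP algorithm) applied to the subgraph of $G$ induced by $Q_i^{(j)}\cup R_i\cup\{b_i\}$ returns a set $\hat R_i^{(j)}\subseteq R_i$ consisting of the relays on one chosen path of at most $h_{\max}$ edges from each source of $Q_i^{(j)}$ to $b_i$. Let $n_i^{(j)}$ be the number of relays in $\hat R_i^{(j)}$ not selected in earlier iterations (earlier-selected relays have cost zero thereafter), and $C_i^{(j)}=\frac{c_s+c_r n_i^{(j)}}{|Q_i^{(j)}|}$. The sink $b_i$ with least $C_i^{(j)}$ is picked (ties broken in favor of larger $|Q_i^{(j)}|$), its sources $Q_i^{(j)}$ become covered and the relays $\hat R_i^{(j)}$ are selected. Stop when all sources are covered; output the picked sinks and selected relays. *)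

theory Defs
  imports Main "HOL-Library.Multiset" Complex_Main
begin

text \<open>Undirected graph: symmetric adjacency relation E on vertices of type 'v.
  A path of at most h edges from u to v inside vertex set S
  (i.e. in the subgraph induced by S).\<close>

definition hpath :: "('v \<Rightarrow> 'v \<Rightarrow> bool) \<Rightarrow> 'v set \<Rightarrow> 'v \<Rightarrow> 'v \<Rightarrow> nat \<Rightarrow> 'v list \<Rightarrow> bool" where
  "hpath E S u v h p \<longleftrightarrow>
     p \<noteq> [] \<and> hd p = u \<and> last p = v \<and> set p \<subseteq> S \<and> distinct p \<and>
     (\<forall>i. Suc i < length p \<longrightarrow> E (p ! i) (p ! Suc i)) \<and>
     length p \<le> Suc h"

definition reach :: "('v \<Rightarrow> 'v \<Rightarrow> bool) \<Rightarrow> 'v set \<Rightarrow> 'v \<Rightarrow> 'v \<Rightarrow> nat \<Rightarrow> bool" where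
  "reach E S u v h \<longleftrightarrow> (\<exists>p. hpath E S u v h p)"

definition feasible ::
  "('v \<Rightarrow> 'v \<Rightarrow> bool) \<Rightarrow> 'v set \<Rightarrow> 'v set \<Rightarrow> 'v set \<Rightarrow> nat \<Rightarrow> 'v set \<Rightarrow> 'v set \<Rightarrow> bool" where
  "feasible E Q R B h B' R' \<longleftrightarrow> B' \<subseteq> B \<and> R' \<subseteq> R \<and>
     (\<forall>q\<in>Q. \<exists>b\<in>B'. reach E (Q \<union> R' \<union> B') q b h)"

definition cost :: "real \<Rightarrow> real \<Rightarrow> 'v set \<Rightarrow> 'v set \<Rightarrow> real" where
  "cost cs cr B' R' = cs * real (card B') + cr * real (card R')"

definition Qi :: "('v \<Rightarrow> 'v \<Rightarrow> bool) \<Rightarrow> 'v set \<Rightarrow> 'v set \<Rightarrow> 'v set \<Rightarrow> nat \<Rightarrow> 'v \<Rightarrow> 'v set" where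
  "Qi E Q R B h b = {q \<in> Q. reach E (Q \<union> R \<union> B) q b h}"

definition Ri :: "('v \<Rightarrow> 'v \<Rightarrow> bool) \<Rightarrow> 'v set \<Rightarrow> 'v set \<Rightarrow> 'v set \<Rightarrow> nat \<Rightarrow> 'v \<Rightarrow> 'v set" where
  "Ri E Q R B h b = {r \<in> R. reach E (Q \<union> R \<union> B) r b (h - 1)}"

text \<open>Specification of the relay-selection subroutine (e.g. SPTiRP): applied to the
  subgraph induced by Qj \<union> Rb \<union> {b}, it returns the relays on one chosen path of at
  most h edges from each source of Qj to b.\<close>
definition relay_sub_ok ::
  "('v \<Rightarrow> 'v \<Rightarrow> bool) \<Rightarrow> 'v set \<Rightarrow> 'v set \<Rightarrow> 'v \<Rightarrow> nat \<Rightarrow> 'v set \<Rightarrow> bool" where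
  "relay_sub_ok E Qj Rb b h Rhat \<longleftrightarrow>
     (\<exists>pf :: 'v \<Rightarrow> 'v list.
        (\<forall>q\<in>Qj. hpath E (Qj \<union> Rb \<union> {b}) q b h (pf q)) \<and>
        Rhat = (\<Union>q\<in>Qj. set (pf q) \<inter> Rb))"

text \<open>State: picked sinks P, covered sources C, selected relays S.
  Candidates are the not-yet-picked sinks b with nonempty Q_b^(j) (others have
  infinite cost-effectiveness).\<close>
definition greedy_step ::
  "('v \<Rightarrow> 'v \<Rightarrow> bool) \<Rightarrow> 'v set \<Rightarrow> 'v set \<Rightarrow> 'v set \<Rightarrow> nat \<Rightarrow> real \<Rightarrow> real \<Rightarrow>
   'v set \<Rightarrow> 'v set \<Rightarrow> 'v set \<Rightarrow> 'v set \<Rightarrow> 'v set \<Rightarrow> 'v set \<Rightarrow> bool" where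
  "greedy_step E Q R B h cs cr P C S P' C' S' \<longleftrightarrow>
    (let Qj = (\<lambda>b. Qi E Q R B h b - C);
         cand = {b \<in> B - P. Qj b \<noteq> {}}
     in \<exists>Rh :: 'v \<Rightarrow> 'v set.
          (\<forall>b\<in>cand. relay_sub_ok E (Qj b) (Ri E Q R B h b) b h (Rh b)) \<and>
          (let Cst = (\<lambda>b. (cs + cr * real (card (Rh b - S))) / real (card (Qj b)))
           in \<exists>b\<in>cand.
                (\<forall>b'\<in>cand. Cst b < Cst b' \<or> (Cst b = Cst b' \<and> card (Qj b') \<le> card (Qj b))) \<and>
                P' = P \<union> {b} \<and> C' = C \<union> Qj b \<and> S' = S \<union> Rh b))"

inductive greedy_out ::
  "('v \<Rightarrow> 'v \<Rightarrow> bool) \<Rightarrow> 'v set \<Rightarrow> 'v set \<Rightarrow> 'v set \<Rightarrow> nat \<Rightarrow> real \<Rightarrow> real \<Rightarrow>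
   'v set \<Rightarrow> 'v set \<Rightarrow> 'v set \<Rightarrow> 'v set \<times> 'v set \<Rightarrow> bool"
  for E Q R B h cs cr where
  stop: "Q \<subseteq> C \<Longrightarrow> greedy_out E Q R B h cs cr P C S (P, S)"
| step: "\<not> Q \<subseteq> C \<Longrightarrow> greedy_step E Q R B h cs cr P C S P' C' S' \<Longrightarrow>
         greedy_out E Q R B h cs cr P' C' S' out \<Longrightarrow> greedy_out E Q R B h cs cr P C S out"

text \<open>Possible outputs of SmartSelect (for any admissible subroutine outputs and
  any resolution of the remaining ties).\<close>
definition smart_select ::
  "('v \<Rightarrow> 'v \<Rightarrow> bool) \<Rightarrow> 'v set \<Rightarrow> 'v set \<Rightarrow> 'v set \<Rightarrow> nat \<Rightarrow> real \<Rightarrow> real \<Rightarrow>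
   'v set \<times> 'v set \<Rightarrow> bool" where
  "smart_select E Q R B h cs cr out \<longleftrightarrow>
    (if \<exists>b\<in>B. \<forall>q\<in>Q. reach E (Q \<union> B) q b h
     then \<exists>b\<in>B. (\<forall>q\<in>Q. reach E (Q \<union> B) q b h) \<and> out = ({b}, {})
     else (\<forall>q\<in>Q. \<exists>b\<in>B. reach E (Q \<union> R \<union> B) q b h) \<and>
          greedy_out E Q R B h cs cr {} {} {} out)"

end

theory Submission
  imports Defs
begin

lemma hpath_mono: "hpath E S u v h p \<Longrightarrow> S \<subseteq> T \<Longrightarrow> hpath E T u v h p"
  unfolding hpath_def by auto

lemma relays_card:
  assumes "hpath E S q b h p" "q \<notin> Rb" "b \<notin> Rb" "q \<noteq> b"
  shows "card (set p \<inter> Rb) \<le> h - 1"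
proof -
  have sub: "set p \<inter> Rb \<subseteq> set p - {q, b}" using assms by auto
  have qb: "q \<in> set p" "b \<in> set p" using assms(1) unfolding hpath_def
    by (auto intro: hd_in_set last_in_set dest: sym)
  have "card (set p - {q,b}) = card (set p) - 2"
    using qb assms(4) by (subst card_Diff_subset) auto
  also have "card (set p) = length p" using assms(1) unfolding hpath_def by (simp add: distinct_card)
  also have "length p \<le> Suc h" using assms(1) unfolding hpath_def by simp
  finally have "card (set p - {q,b}) \<le> h - 1" by simp
  moreover have "card (set p \<inter> Rb) \<le> card (set p - {q,b})" using sub by (intro card_mono) auto
  ultimately show ?thesis by simp
qed

lemma Rh_sub: "relay_sub_ok E Qj Rb b h Rh \<Longrightarrow> Rh \<subseteq> Rb"
  unfolding relay_sub_ok_def by auto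

lemma Rh_card:
  assumes "relay_sub_ok E Qj Rb b h Rh" "finite Qj" "Qj \<inter> Rb = {}" "b \<notin> Rb" "b \<notin> Qj"
  shows "card Rh \<le> (h - 1) * card Qj"
proof -
  obtain pf where pf: "\<forall>q\<in>Qj. hpath E (Qj \<union> Rb \<union> {b}) q b h (pf q)"
    and Rh: "Rh = (\<Union>q\<in>Qj. set (pf q) \<inter> Rb)"
    using assms(1) unfolding relay_sub_ok_def by blast
  have "card Rh \<le> (\<Sum>q\<in>Qj. card (set (pf q) \<inter> Rb))" unfolding Rh by (rule card_UN_le[OF assms(2)])
  also have "\<dots> \<le> (\<Sum>q\<in>Qj. h - 1)"
  proof (rule sum_mono)
    fix q assume q: "q \<in> Qj"
    show "card (set (pf q) \<inter> Rb) \<le> h - 1"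
      by (rule relays_card[OF pf[rule_format, OF q]]) (use q assms in auto)
  qed
  finally show ?thesis by (simp add: mult.commute)
qed

lemma arith_key:
  fixes k t u :: nat
  assumes "1 \<le> k" "1 \<le> t" "t \<le> u" "(u - t) * (k * (k+1)) \<le> t * u"
  shows "t = u \<or> k + 1 \<le> t \<or> (t = k \<and> u = k + 1)"
proof (rule ccontr)
  assume nt: "\<not> ?thesis"
  have tu: "t < u" using nt assms(3) by linarith
  have tk: "t \<le> k" using nt by linarith
  have ne: "\<not> (t = k \<and> u = k+1)" using nt by blast
  define d where "d = u - t"
  have d1: "d \<ge> 1" using tu d_def by simp
  have u: "u = t + d" using tu d_def by simp
  have tuu: "t * u = t * t + t * d" unfolding u by (rule distrib_left)
  have main: "d * (k*(k+1)) \<le> t * t + t * d" using assms(4) tuu unfolding d_def[symmetric] by simp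
  have a: "t*t \<le> k*k" using tk by (simp add: mult_le_mono)
  have b: "t*d \<le> k*d" using tk by simp
  have eq: "d * (k*(k+1)) = d*(k*k) + k * d" by (simp add: distrib_left mult.commute)
  have dd: "d = 1"
  proof (rule ccontr)
    assume "d \<noteq> 1" hence "d \<ge> 2" using d1 by simp
    hence "2 * (k*k) \<le> d * (k*k)" by (intro mult_le_mono) auto
    hence "2*(k*k) + k*d \<le> k*k + k*d" using main a b eq by linarith
    hence "k*k = 0" by simp
    thus False using assms(1) by simp
  qed
  have "t = k"
  proof (rule ccontr)
    assume "t \<noteq> k" hence "t + 1 \<le> k" using tk by simp
    hence c: "(t+1)*(t+1) \<le> k * k" by (intro mult_le_mono) auto
    have m2: "k*(k+1) \<le> t*t + t" using main dd by simp
    have e1: "(t+1)*(t+1) = t*t + 2*t + 1" by (simp add: algebra_simps)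
    have e2: "k*(k+1) = k*k + k" by simp
    show False using c m2 e1 e2 assms(1) by linarith
  qed
  thus False using ne u dd by simp
qed

definition gb :: "nat \<Rightarrow> nat \<Rightarrow> real" where
  "gb k u = (if u = 0 then 0 else if u = 1 then 1 else real u / real (k+1) + 1)"

lemma gb_step:
  assumes "1 \<le> t" "t \<le> u" "t = u \<or> k + 1 \<le> t \<or> (t = k \<and> u = k + 1)"
  shows "1 + gb k (u - t) \<le> gb k u"
proof -
  have kp: "real (k+1) > 0" by simp
  consider "t = u" | "k + 1 \<le> t" "t < u" | "t = k" "u = k + 1" using assms by linarith
  then show ?thesis
  proof cases
    case 1 then show ?thesis using assms by (simp add: gb_def)
  next
    case 2
    show ?thesis
    proof (cases "u - t = 1")
      case True
      have "real (k+1) \<le> real u" using 2 True by simp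
      hence "1 \<le> real u / real (k+1)" using kp by simp
      then show ?thesis using True 2 by (simp add: gb_def)
    next
      case False
      have "real (k+1) \<le> real t" using 2 by linarith
      hence "1 \<le> real t / real (k+1)" using kp by simp
      moreover have "real (u - t) = real u - real t" using 2 by simp
      ultimately have "1 + (real (u - t) / real (k+1) + 1) \<le> real u / real (k+1) + 1"
        using kp by (simp add: diff_divide_distrib)
      then show ?thesis using False 2 by (simp add: gb_def)
    qed
  next
    case 3 then show ?thesis using assms by (simp add: gb_def)
  qed
qed

lemma gb_le: "u \<ge> 1 \<Longrightarrow> gb k u \<le> real u / real (k+1) + 1"
  by (simp add: gb_def)


lemma greedy_bound:
  assumes fin: "finite Q" "finite R" "finite B"
    and disj: "Q \<inter> R = {}" "Q \<inter> B = {}" "R \<inter> B = {}"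
    and hpos: "h > 0" and cs: "cs > 0" and cr: "cr > 0" and k: "k \<ge> 1"
    and crh: "cr * (real h - 1) \<le> cs / (real k * (real k + 1))"
    and bs: "bs \<in> B" "Qi E Q R B h bs = Q"
  shows "greedy_out E Q R B h cs cr P C S out \<Longrightarrow> C \<subseteq> Q \<Longrightarrow> (bs \<notin> P \<or> Q \<subseteq> C) \<Longrightarrow>
     finite P \<Longrightarrow> finite S \<Longrightarrow>
     real (card (fst out)) \<le> real (card P) + gb k (card (Q - C)) \<and>
     card (snd out) \<le> card S + (h - 1) * card (Q - C)"
proof (induction rule: greedy_out.induct)
  case (stop C P S)
  then have "Q - C = {}" by auto
  then show ?case by (simp add: gb_def)
next
  case (step C P S P' C' S' out)
  define Qj where "Qj = (\<lambda>b. Qi E Q R B h b - C)"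
  define cand where "cand = {b \<in> B - P. Qj b \<noteq> {}}"
  from step.hyps(2) obtain Rh b where
    Rh: "\<forall>b\<in>cand. relay_sub_ok E (Qj b) (Ri E Q R B h b) b h (Rh b)" and
    bc: "b \<in> cand" and
    best: "\<forall>b'\<in>cand. (cs + cr * real (card (Rh b - S))) / real (card (Qj b)) < (cs + cr * real (card (Rh b' - S))) / real (card (Qj b')) \<or>
        ((cs + cr * real (card (Rh b - S))) / real (card (Qj b)) = (cs + cr * real (card (Rh b' - S))) / real (card (Qj b')) \<and> card (Qj b') \<le> card (Qj b))" and
    upd: "P' = P \<union> {b}" "C' = C \<union> Qj b" "S' = S \<union> Rh b"
    unfolding greedy_step_def Let_def Qj_def cand_def by blast
  define Cst where "Cst = (\<lambda>b. (cs + cr * real (card (Rh b - S))) / real (card (Qj b)))"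
  have QiQ: "\<And>b. Qi E Q R B h b \<subseteq> Q" unfolding Qi_def by auto
  have RiR: "\<And>b. Ri E Q R B h b \<subseteq> R" unfolding Ri_def by auto
  define u where "u = card (Q - C)"
  have upos: "u \<ge> 1" using step.hyps(1) fin(1) unfolding u_def
    by (metis Diff_eq_empty_iff card_0_eq finite_Diff less_one not_less)
  have bsP: "bs \<notin> P" using step.prems(2) step.hyps(1) by blast
  have Qjbs: "Qj bs = Q - C" unfolding Qj_def bs(2) ..
  have bscand: "bs \<in> cand" unfolding cand_def using bs(1) bsP Qjbs step.hyps(1) by auto
  have finQj: "\<And>b. finite (Qj b)" unfolding Qj_def using QiQ fin(1) by (meson finite_Diff finite_subset)
  have card_Rh: "\<And>b. b \<in> cand \<Longrightarrow> card (Rh b) \<le> (h - 1) * card (Qj b)"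
  proof -
    fix b assume b: "b \<in> cand"
    hence bB: "b \<in> B" unfolding cand_def by auto
    show "card (Rh b) \<le> (h - 1) * card (Qj b)"
    proof (rule Rh_card[OF Rh[rule_format, OF b] finQj])
      show "Qj b \<inter> Ri E Q R B h b = {}" using QiQ RiR disj unfolding Qj_def by blast
      show "b \<notin> Ri E Q R B h b" using RiR disj bB by blast
      show "b \<notin> Qj b" using QiQ disj bB unfolding Qj_def by blast
    qed
  qed
  have finRh: "\<And>b. b \<in> cand \<Longrightarrow> finite (Rh b)"
    using Rh Rh_sub RiR fin(2) by (meson finite_subset)
  define t where "t = card (Qj b)"
  have Qjb_sub: "Qj b \<subseteq> Q - C" unfolding Qj_def using QiQ by blast
  have t1: "t \<ge> 1" using bc finQj unfolding t_def cand_def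
    by (metis (mono_tags, lifting) card_0_eq less_one mem_Collect_eq not_less)
  have tu: "t \<le> u" unfolding t_def u_def using Qjb_sub fin(1) by (intro card_mono) auto
  have "Cst b \<le> Cst bs" using best bscand unfolding Cst_def by force
  moreover have "cs / real t \<le> Cst b"
    unfolding Cst_def t_def using cr t1 t_def by (intro divide_right_mono) auto
  moreover have "Cst bs \<le> cs / real u + cr * (real h - 1)"
  proof -
    have "card (Rh bs - S) \<le> card (Rh bs)" using finRh[OF bscand] by (intro card_mono) auto
    also have "\<dots> \<le> (h - 1) * u" using card_Rh[OF bscand] Qjbs u_def by simp
    finally have "real (card (Rh bs - S)) \<le> real ((h - 1) * u)" by (simp only: of_nat_le_iff)
    also have "real ((h - 1) * u) = (real h - 1) * real u" using hpos by (simp add: of_nat_diff)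
    finally have "real (card (Rh bs - S)) \<le> (real h - 1) * real u" .
    hence "cs + cr * real (card (Rh bs - S)) \<le> cs + cr * ((real h - 1) * real u)"
      using cr by (intro add_left_mono mult_left_mono) auto
    hence "Cst bs \<le> (cs + cr * ((real h - 1) * real u)) / real u"
      unfolding Cst_def Qjbs u_def[symmetric] using upos by (intro divide_right_mono) auto
    also have "\<dots> = cs / real u + cr * (real h - 1)" using upos by (simp add: field_simps)
    finally show ?thesis .
  qed
  ultimately have ineq: "cs / real t \<le> cs / real u + cs / (real k * (real k + 1))" using crh by linarith
  have natineq: "(u - t) * (k * (k+1)) \<le> t * u"
  proof -
    have kk: "real k * (real k + 1) > 0" using k by simp
    have "cs * (1 / real t) \<le> cs * (1 / real u + 1 / (real k * (real k + 1)))"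
      using ineq by (simp add: distrib_left)
    hence "1 / real t \<le> 1 / real u + 1 / (real k * (real k + 1))"
      using mult_le_cancel_left_pos[OF cs] by blast
    hence "real u * (real k * (real k + 1)) \<le> real t * (real k * (real k + 1)) + real t * real u"
      using kk t1 upos by (simp add: field_simps)
    hence "u * (k * (k+1)) \<le> t * (k * (k+1)) + t * u" by (metis (mono_tags) of_nat_add of_nat_le_iff of_nat_mult of_nat_Suc Suc_eq_plus1 add.commute)
    thus ?thesis by (simp add: diff_mult_distrib)
  qed
  have key: "t = u \<or> k + 1 \<le> t \<or> (t = k \<and> u = k + 1)" by (rule arith_key[OF k t1 tu natineq])
  have C'Q: "C' \<subseteq> Q" using upd step.prems(1) Qjb_sub by auto
  have inv': "bs \<notin> P' \<or> Q \<subseteq> C'"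
  proof (cases "b = bs")
    case True then show ?thesis using upd Qjbs by auto
  next
    case False then show ?thesis using upd bsP by auto
  qed
  have finP': "finite P'" using upd step.prems(3) by simp
  have finS': "finite S'" using upd step.prems(4) finRh[OF bc] by simp
  have IH: "real (card (fst out)) \<le> real (card P') + gb k (card (Q - C')) \<and>
     card (snd out) \<le> card S' + (h - 1) * card (Q - C')"
    using step.IH[OF C'Q inv' finP' finS'] .
  have QC': "Q - C' = (Q - C) - Qj b" using upd by auto
  have u': "card (Q - C') = u - t" unfolding QC' u_def t_def
    using Qjb_sub fin(1) by (subst card_Diff_subset) (auto intro: finite_subset)
  have cP': "card P' \<le> card P + 1" using upd step.prems(3) by (simp add: card_insert_if)
  have cS': "card S' \<le> card S + (h - 1) * t"
  proof -
    have "card S' \<le> card S + card (Rh b)" unfolding upd by (rule card_Un_le)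
    thus ?thesis using card_Rh[OF bc] t_def by simp
  qed
  have "real (card (fst out)) \<le> real (card P) + 1 + gb k (u - t)" using IH u' cP' by simp
  also have "\<dots> \<le> real (card P) + gb k u" using gb_step[OF t1 tu key] by simp
  finally have A: "real (card (fst out)) \<le> real (card P) + gb k (card (Q - C))" unfolding u_def .
  have c1: "card (snd out) \<le> card S + (h - 1) * t + (h - 1) * (u - t)" using IH u' cS' by simp
  have c2: "(h - 1) * t + (h - 1) * (u - t) = (h - 1) * u" using tu
    by (metis add_diff_inverse_nat diff_mult_distrib2 distrib_left not_less)
  have B: "card (snd out) \<le> card S + (h - 1) * card (Q - C)" using c1 c2 unfolding u_def by linarith
  show ?case using A B ..
qed


lemma alg_id: "(x::real) > 0 \<Longrightarrow> cs * (m / (x+1) + 1) + cs / (x * (x + 1)) * m = cs * (1 + m / x)"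
proof -
  assume x: "x > 0"
  have eq: "m / (x+1) + m / (x * (x + 1)) = m / x"
    using x by (simp add: field_simps) (metis add_pos_pos mult_pos_pos nonzero_mult_div_cancel_right distrib_left order_less_irrefl)
  have e1: "cs * (m / (x+1) + m / (x * (x + 1))) = cs * (m / x)" by (simp only: eq)
  have e2: "cs / (x * (x + 1)) * m = cs * (m / (x * (x + 1)))" by simp
  have e3: "cs * (m / (x+1) + m / (x * (x + 1))) = cs * (m / (x+1)) + cs * (m / (x * (x + 1)))"
    by (rule distrib_left)
  have e4: "cs * (m / (x+1) + 1) = cs * (m / (x+1)) + cs" by (simp add: distrib_left)
  have e5: "cs * (1 + m / x) = cs + cs * (m / x)" by (simp add: distrib_left)
  show ?thesis unfolding e2 e4 e5 using e1 e3 by linarith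
qed

theorem corollary1:
  fixes E :: "'v \<Rightarrow> 'v \<Rightarrow> bool" and Q R B :: "'v set" and h :: nat
    and cs cr \<alpha> :: real and Bout Rout :: "'v set"
  assumes "finite Q" "finite R" "finite B"
    and "Q \<inter> R = {}" "Q \<inter> B = {}" "R \<inter> B = {}"
    and "\<And>x y. E x y \<Longrightarrow> E y x"
    and "h > 0" and "cs > 0" and "cr > 0"
    and "Q \<noteq> {}"
    and "\<exists>b R'. feasible E Q R B h {b} R'"
    and "0 < \<alpha>" "\<alpha> \<le> 1"
    and "cs / cr \<ge> of_int \<lceil>\<alpha> * real (card Q)\<rceil> * (of_int \<lceil>\<alpha> * real (card Q)\<rceil> + 1) * (real h - 1)"
    and "smart_select E Q R B h cs cr (Bout, Rout)"
  shows "\<forall>B' R'. feasible E Q R B h B' R' \<longrightarrow>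
           cost cs cr Bout Rout \<le> (1 + 1 / \<alpha>) * cost cs cr B' R'"
proof -
  note fin = assms(1-3) and disj = assms(4-6)
  define m where "m = card Q"
  have m1: "m \<ge> 1" using assms(1,11) unfolding m_def by (simp add: Suc_leI card_gt_0_iff)
  define k where "k = nat \<lceil>\<alpha> * real m\<rceil>"
  have am: "\<alpha> * real m > 0" using assms(13) m1 by simp
  have kr: "real k = of_int \<lceil>\<alpha> * real m\<rceil>" unfolding k_def using am by simp
  have kge: "real k \<ge> \<alpha> * real m" unfolding kr by linarith
  have k1: "k \<ge> 1" using kge am by linarith
  have kpos: "real k * (real k + 1) > 0" using k1 by simp
  have hr: "real h - 1 \<ge> 0" using assms(8) by simp
  have crh: "cr * (real h - 1) \<le> cs / (real k * (real k + 1))"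
  proof -
    have "real k * (real k + 1) * (real h - 1) \<le> cs / cr" using assms(15) kr m_def by simp
    hence "real k * (real k + 1) * (real h - 1) * cr \<le> cs" using assms(10) by (simp add: field_simps)
    thus ?thesis using kpos by (simp add: field_simps)
  qed
  obtain bs R' where bsf: "feasible E Q R B h {bs} R'" using assms(12) by blast
  have bsB: "bs \<in> B" using bsf unfolding feasible_def by auto
  have R'R: "R' \<subseteq> R" using bsf unfolding feasible_def by auto
  have Qibs: "Qi E Q R B h bs = Q"
  proof -
    have "\<forall>q\<in>Q. reach E (Q \<union> R \<union> B) q bs h"
    proof
      fix q assume "q \<in> Q"
      then have "reach E (Q \<union> R' \<union> {bs}) q bs h" using bsf unfolding feasible_def by auto
      then obtain p where "hpath E (Q \<union> R' \<union> {bs}) q bs h p" unfolding reach_def by blast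
      hence "hpath E (Q \<union> R \<union> B) q bs h p" by (rule hpath_mono) (use R'R bsB in auto)
      thus "reach E (Q \<union> R \<union> B) q bs h" unfolding reach_def by blast
    qed
    thus ?thesis unfolding Qi_def by auto
  qed
  have bound: "cost cs cr Bout Rout \<le> cs * (1 + 1 / \<alpha>)"
  proof (cases "\<exists>b\<in>B. \<forall>q\<in>Q. reach E (Q \<union> B) q b h")
    case True
    then obtain b where "Bout = {b}" "Rout = {}" using assms(16) unfolding smart_select_def by auto
    then have "cost cs cr Bout Rout = cs" unfolding cost_def by simp
    moreover have "0 \<le> cs / \<alpha>" using assms(9,13) by simp
    ultimately show ?thesis by (simp add: distrib_left)
  next
    case False
    then have go: "greedy_out E Q R B h cs cr {} {} {} (Bout, Rout)"
      using assms(16) unfolding smart_select_def by auto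
    have gb: "real (card Bout) \<le> gb k m" and rb: "card Rout \<le> (h - 1) * m"
      using greedy_bound[OF fin disj assms(8,9,10) k1 crh bsB Qibs go] unfolding m_def by auto
    have b1: "real (card Bout) \<le> real m / real (k+1) + 1" using gb gb_le[OF m1, of k] by linarith
    have "real (card Rout) \<le> real ((h - 1) * m)" using rb by (simp only: of_nat_le_iff)
    also have "\<dots> = (real h - 1) * real m" using assms(8) by (simp add: of_nat_diff)
    finally have b2: "real (card Rout) \<le> (real h - 1) * real m" .
    have "cost cs cr Bout Rout \<le> cs * (real m / real (k+1) + 1) + cr * ((real h - 1) * real m)"
      unfolding cost_def using b1 b2 assms(9,10)
      by (intro add_mono mult_left_mono) auto
    also have "cr * ((real h - 1) * real m) \<le> cs / (real k * (real k + 1)) * real m"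
    proof -
      have "(cr * (real h - 1)) * real m \<le> cs / (real k * (real k + 1)) * real m"
        using crh by (rule mult_right_mono) simp
      thus ?thesis by (simp only: mult.assoc)
    qed
    finally have c1: "cost cs cr Bout Rout \<le> cs * (real m / real (k+1) + 1) + cs / (real k * (real k + 1)) * real m"
      by simp
    have "cs * (real m / real (k+1) + 1) + cs / (real k * (real k + 1)) * real m
          = cs * (1 + real m / real k)"
    proof -
      have n1: "real k > 0" "real (k+1) = real k + 1" using k1 by auto
      show ?thesis unfolding n1(2) by (rule alg_id[OF n1(1)])
    qed
    also have "\<dots> \<le> cs * (1 + 1 / \<alpha>)"
    proof -
      have "real m / real k \<le> 1 / \<alpha>" using kge assms(13) k1 by (simp add: field_simps)
      thus ?thesis using assms(9) by simp
    qed
    finally show ?thesis using c1 by linarith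
  qed
  show ?thesis
  proof (intro allI impI)
    fix B' R' assume f: "feasible E Q R B h B' R'"
    obtain q where "q \<in> Q" using assms(11) by blast
    then obtain b where "b \<in> B'" using f unfolding feasible_def by blast
    moreover have "finite B'" using f fin(3) unfolding feasible_def by (auto intro: finite_subset)
    ultimately have "card B' \<ge> 1" using card_gt_0_iff by (metis One_nat_def Suc_leI empty_iff)
    hence "cs * 1 \<le> cs * real (card B')" using assms(9) by (intro mult_left_mono) auto
    moreover have "0 \<le> cr * real (card R')" using assms(10) by simp
    ultimately have "cs \<le> cost cs cr B' R'" unfolding cost_def by linarith
    moreover have "1 + 1 / \<alpha> \<ge> 0" using assms(13) by simp
    ultimately have "cs * (1 + 1 / \<alpha>) \<le> (1 + 1 / \<alpha>) * cost cs cr B' R'"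
      by (metis mult.commute mult_right_mono)
    thus "cost cs cr Bout Rout \<le> (1 + 1 / \<alpha>) * cost cs cr B' R'" using bound by linarith
  qed
qed

end
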